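(* In the setting below, suppose $\mathbb{E}(m_0-\tilde m_0)=M_0$. Then for every $t\ge1$, $$\mathbb{E}(m_t-\tilde m_t)=\Big(\prod_{i=0}^{t-1}A_{t-i}\Big)M_0+\sum_{i=0}^{t-2}\Big(\prod_{j=0}^{i}A_{t-j}\Big)C_{t-1-i}+C_t,$$ where $A_t=F-\tilde K_tHF$, $C_t=-\tilde K_t\epsilon_t$, and $\prod_{j=0}^{i}A_{t-j}=A_tA_{t-1}\cdots A_{t-i}$.
   Context: Let $F,B,H,R,Q\in\mathbb{R}^{2\times2}$. Target motion: $x_{t+1}=Fx_t+Bu_t+w_t$, $w_t\sim\mathcal{N}(0,R)$; measurement $z_t=Hx_t+v_t$, $v_t\sim\mathcal{N}(0,Q)$; spoofed measurement $\tilde z_t=z_t+\epsilon_t$ with deterministic spoofing signals $\epsilon_t\in\mathbb{R}^2$ and deterministic controls $u_t$. Kalman filter: from initial $(m_0,\Sigma_0)$ and measurements $y_t$, $\Sigma_{t|t-1}=F\Sigma_{t-1}F^T+R$, $K_t=\Sigma_{t|t-1}H^T(H\Sigma_{t|t-1}H^T+Q)^{-1}$, $\Sigma_t=(I-K_tH)\Sigma_{t|t-1}$, $m_t=(I-K_tH)(Fm_{t-1}+Bu_{t-1})+K_ty_t$; the gains depend only on the (deterministic) initial covariance and model matrices. $(m_t,K_t)$ come from the filter with initial $(m_0,\Sigma_0)$ fed $z_t$; $(\tilde m_t,\tilde K_t)$ from the filter with initial $(\tilde m_0,\tilde\Sigma_0)$ fed $\tilde z_t$. As in the paper, the measurement is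 modeled relative to the filter estimate as $z_t=H(Fm_{t-1}+Bu_{t-1}+w_t)+v_t$ with zero-mean noises $w_t,v_t$, so that $\mathbb{E}[z_t-H(Fm_{t-1}+Bu_{t-1})]=0$. *)

theory Defs
  imports "HOL-Probability.Probability"
begin

type_synonym mat2 = "real^2^2"
type_synonym vec2 = "real^2"

definition pred_cov :: "mat2 \<Rightarrow> mat2 \<Rightarrow> mat2 \<Rightarrow> mat2" where
  "pred_cov F R S = F ** S ** transpose F + R"

definition kgain :: "mat2 \<Rightarrow> mat2 \<Rightarrow> mat2 \<Rightarrow> mat2 \<Rightarrow> mat2 \<Rightarrow> mat2" where
  "kgain F R H Q S =
     pred_cov F R S ** transpose H ** matrix_inv (H ** pred_cov F R S ** transpose H + Q)"

fun kf_cov :: "mat2 \<Rightarrow> mat2 \<Rightarrow> mat2 \<Rightarrow> mat2 \<Rightarrow> mat2 \<Rightarrow> nat \<Rightarrow> mat2" where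
  "kf_cov F R H Q S0 0 = S0"
| "kf_cov F R H Q S0 (Suc t) =
     (mat 1 - kgain F R H Q (kf_cov F R H Q S0 t) ** H) ** pred_cov F R (kf_cov F R H Q S0 t)"

text \<open>Gain K_t (meaningful for t \<ge> 1), from the filter with initial covariance S0.\<close>
definition kf_gain :: "mat2 \<Rightarrow> mat2 \<Rightarrow> mat2 \<Rightarrow> mat2 \<Rightarrow> mat2 \<Rightarrow> nat \<Rightarrow> mat2" where
  "kf_gain F R H Q S0 t = kgain F R H Q (kf_cov F R H Q S0 (t - 1))"

definition mat_list_prod :: "mat2 list \<Rightarrow> mat2" where
  "mat_list_prod Ms = foldr (**) Ms (mat 1)"

end

theory Submission
  imports Defs
begin

lemma mlp_cons: "mat_list_prod (a # l) = a ** mat_list_prod l"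
  by (simp add: mat_list_prod_def)

lemma rec_sol:
  fixes D C :: "nat \<Rightarrow> vec2" and A :: "nat \<Rightarrow> mat2"
  assumes D0: "D 0 = M0" and DS: "\<And>s. D (Suc s) = A (Suc s) *v D s + C (Suc s)"
  shows "D (Suc n) = mat_list_prod (map (\<lambda>i. A (Suc n - i)) [0..<Suc n]) *v M0
     + (\<Sum>i<n. mat_list_prod (map (\<lambda>j. A (Suc n - j)) [0..<Suc i]) *v C (n - i))
     + C (Suc n)"
proof (induction n)
  case 0
  then show ?case using D0 DS[of 0] by (simp add: mat_list_prod_def)
next
  case (Suc n)
  have L: "\<And>k. map (\<lambda>i. A (Suc (Suc n) - i)) [0..<Suc k] = A (Suc (Suc n)) # map (\<lambda>i. A (Suc n - i)) [0..<k]"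
    by (simp only: map_upt_Suc) simp
  have S: "(\<Sum>i<Suc n. mat_list_prod (map (\<lambda>j. A (Suc (Suc n) - j)) [0..<Suc i]) *v C (Suc n - i))
     = A (Suc (Suc n)) *v C (Suc n) + A (Suc (Suc n)) *v (\<Sum>i<n. mat_list_prod (map (\<lambda>j. A (Suc n - j)) [0..<Suc i]) *v C (n - i))"
  proof -
    have "(\<Sum>i<Suc n. mat_list_prod (map (\<lambda>j. A (Suc (Suc n) - j)) [0..<Suc i]) *v C (Suc n - i))
      = mat_list_prod (map (\<lambda>j. A (Suc (Suc n) - j)) [0..<Suc 0]) *v C (Suc n - 0)
        + (\<Sum>i<n. mat_list_prod (map (\<lambda>j. A (Suc (Suc n) - j)) [0..<Suc (Suc i)]) *v C (Suc n - Suc i))"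
      by (rule sum.lessThan_Suc_shift)
    also have "\<dots> = A (Suc (Suc n)) *v C (Suc n) + (\<Sum>i<n. A (Suc (Suc n)) *v (mat_list_prod (map (\<lambda>j. A (Suc n - j)) [0..<Suc i]) *v C (n - i)))"
      by (simp only: L mlp_cons matrix_vector_mul_assoc[symmetric] diff_Suc_Suc diff_zero)
         (simp add: mat_list_prod_def del: upt_Suc)
    finally show ?thesis by (simp add: vec.sum del: upt_Suc)
  qed
  show ?case
    apply (subst DS, subst Suc, subst S)
    apply (simp only: L mlp_cons matrix_vector_mul_assoc[symmetric] matrix_vector_right_distrib)
    apply (simp only: add_ac)
    done
qed

theorem corollary1:
  fixes M :: "'s measure"
    and F B H R Q S0 S0' :: mat2
    and u eps :: "nat \<Rightarrow> vec2"
    and w v :: "nat \<Rightarrow> 's \<Rightarrow> vec2"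
    and z m m' :: "nat \<Rightarrow> 's \<Rightarrow> vec2"
    and M0 :: vec2
    and t :: nat
  assumes "prob_space M"
    and w_int: "\<And>s. integrable M (w s)" and w_mean: "\<And>s. integral\<^sup>L M (w s) = 0"
    and v_int: "\<And>s. integrable M (v s)" and v_mean: "\<And>s. integral\<^sup>L M (v s) = 0"
    and m0_int: "integrable M (m 0)" and m0'_int: "integrable M (m' 0)"
    and z_def: "\<And>s x. z (Suc s) x =
                  H *v (F *v m s x + B *v u s + w (Suc s) x) + v (Suc s) x"
    and m_step: "\<And>s x. m (Suc s) x =
                  (mat 1 - kf_gain F R H Q S0 (Suc s) ** H) *v (F *v m s x + B *v u s)
                  + kf_gain F R H Q S0 (Suc s) *v z (Suc s) x"
    and m'_step: "\<And>s x. m' (Suc s) x =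
                  (mat 1 - kf_gain F R H Q S0' (Suc s) ** H) *v (F *v m' s x + B *v u s)
                  + kf_gain F R H Q S0' (Suc s) *v (z (Suc s) x + eps (Suc s))"
    and M0_def: "integral\<^sup>L M (\<lambda>x. m 0 x - m' 0 x) = M0"
    and t_ge: "t \<ge> 1"
  shows "integral\<^sup>L M (\<lambda>x. m t x - m' t x) =
           mat_list_prod (map (\<lambda>i. F - kf_gain F R H Q S0' (t - i) ** H ** F) [0..<t]) *v M0
         + (\<Sum>i<t - 1. mat_list_prod (map (\<lambda>j. F - kf_gain F R H Q S0' (t - j) ** H ** F) [0..<Suc i])
                        *v (- (kf_gain F R H Q S0' (t - 1 - i) *v eps (t - 1 - i))))
         + (- (kf_gain F R H Q S0' t *v eps t))"
proof -
  interpret prob_space M by fact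
  define K where "K = kf_gain F R H Q S0"
  define K' where "K' = kf_gain F R H Q S0'"
  define A where "A = (\<lambda>s. F - K' s ** H ** F)"
  define C where "C = (\<lambda>s. - (K' s *v eps s))"
  have mS: "m (Suc s) x = F *v m s x + B *v u s + K (Suc s) *v (H *v w (Suc s) x + v (Suc s) x)" for s x
    unfolding m_step z_def K_def
    by (simp add: matrix_vector_mult_diff_rdistrib matrix_vector_mul_assoc[symmetric]
        matrix_vector_right_distrib algebra_simps)
  have m'S: "m' (Suc s) x = F *v m' s x - K' (Suc s) *v (H *v (F *v m' s x)) + K' (Suc s) *v (H *v (F *v m s x))
      + B *v u s + K' (Suc s) *v (H *v w (Suc s) x + v (Suc s) x) + K' (Suc s) *v eps (Suc s)" for s x
    unfolding m'_step z_def K'_def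
    by (simp add: matrix_vector_mult_diff_rdistrib matrix_vector_mul_assoc[symmetric]
        matrix_vector_right_distrib algebra_simps)
  have dS: "m (Suc s) x - m' (Suc s) x = A (Suc s) *v (m s x - m' s x)
      + (K (Suc s) *v (H *v w (Suc s) x + v (Suc s) x) - K' (Suc s) *v (H *v w (Suc s) x + v (Suc s) x))
      + C (Suc s)" for s x
    unfolding mS m'S A_def C_def
    by (simp add: matrix_vector_mult_diff_rdistrib matrix_vector_mul_assoc[symmetric]
        matrix_vector_mult_diff_distrib algebra_simps)
  have nint: "integrable M (\<lambda>x. H *v w s x + v s x)" for s
    using w_int v_int by (intro Bochner_Integration.integrable_add integrable_bounded_linear[where T="(*v) H"]) auto
  have nmean: "integral\<^sup>L M (\<lambda>x. H *v w s x + v s x) = 0" for s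
    using w_int v_int w_mean v_mean
    by (simp add: Bochner_Integration.integral_add integrable_bounded_linear[where T="(*v) H"]
        integral_bounded_linear[where T="(*v) H"])
  have ints: "integrable M (m s) \<and> integrable M (m' s)" for s
  proof (induction s)
    case 0 then show ?case using m0_int m0'_int by simp
  next
    case (Suc s)
    then have i1: "integrable M (m s)" and i2: "integrable M (m' s)" by auto
    have a: "integrable M (\<lambda>x. F *v m s x + B *v u s + K (Suc s) *v (H *v w (Suc s) x + v (Suc s) x))"
      by (intro Bochner_Integration.integrable_add integrable_const integrable_bounded_linear[where T="(*v) F", OF _ i1]
          integrable_bounded_linear[where T="(*v) (K (Suc s))", OF _ nint]) auto
    have b: "integrable M (\<lambda>x. F *v m' s x - K' (Suc s) *v (H *v (F *v m' s x)) + K' (Suc s) *v (H *v (F *v m s x))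
      + B *v u s + K' (Suc s) *v (H *v w (Suc s) x + v (Suc s) x) + K' (Suc s) *v eps (Suc s))"
      by (intro Bochner_Integration.integrable_add Bochner_Integration.integrable_diff integrable_const
          integrable_bounded_linear[where T="(*v) F", OF _ i2]
          integrable_bounded_linear[where T="\<lambda>y. K' (Suc s) *v (H *v (F *v y))", OF _ i2]
          integrable_bounded_linear[where T="\<lambda>y. K' (Suc s) *v (H *v (F *v y))", OF _ i1]
          integrable_bounded_linear[where T="(*v) (K' (Suc s))", OF _ nint])
        (auto simp: matrix_vector_mul_assoc intro: bounded_linear_compose)
    show ?case using a b by (simp add: mS[abs_def] m'S[abs_def])
  qed
  define D where "D = (\<lambda>s. integral\<^sup>L M (\<lambda>x. m s x - m' s x))"
  have DS: "D (Suc s) = A (Suc s) *v D s + C (Suc s)" for s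
  proof -
    have id: "integrable M (\<lambda>x. m s x - m' s x)" using ints by auto
    have i1: "integrable M (\<lambda>x. A (Suc s) *v (m s x - m' s x))"
      by (rule integrable_bounded_linear[OF _ id]) auto
    have i2: "integrable M (\<lambda>x. K (Suc s) *v (H *v w (Suc s) x + v (Suc s) x) - K' (Suc s) *v (H *v w (Suc s) x + v (Suc s) x))"
      by (intro Bochner_Integration.integrable_diff integrable_bounded_linear[OF _ nint]) auto
    have e2: "integral\<^sup>L M (\<lambda>x. K (Suc s) *v (H *v w (Suc s) x + v (Suc s) x) - K' (Suc s) *v (H *v w (Suc s) x + v (Suc s) x)) = 0"
      by (simp add: Bochner_Integration.integral_diff integrable_bounded_linear[OF _ nint]
          integral_bounded_linear[OF _ nint] nmean)
    have e1: "integral\<^sup>L M (\<lambda>x. A (Suc s) *v (m s x - m' s x)) = A (Suc s) *v D s"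
      unfolding D_def by (rule integral_bounded_linear[OF _ id]) auto
    show ?thesis
      unfolding D_def dS
      by (simp add: Bochner_Integration.integral_add i1 i2 e1[unfolded D_def] e2 prob_space)
  qed
  have D0: "D 0 = M0" using M0_def D_def by simp
  obtain n where tn: "t = Suc n" using t_ge by (cases t) auto
  have "D (Suc n) = mat_list_prod (map (\<lambda>i. A (Suc n - i)) [0..<Suc n]) *v M0
     + (\<Sum>i<n. mat_list_prod (map (\<lambda>j. A (Suc n - j)) [0..<Suc i]) *v C (n - i))
     + C (Suc n)"
    by (rule rec_sol[OF D0 DS])
  then show ?thesis unfolding D_def A_def C_def K'_def tn by simp
qed

end
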